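(* Let $R$ be the set of pairs $(\lambda,\mu)$ with $\lambda$ a triangular partition and $\mu$ a partition whose parts are nonnegative integers (zero parts allowed, counted in $\ell(\mu)$). Let $A_1$ be the set of pairs $(X,Y)$ with $X$ a partition into distinct positive parts, $Y$ a partition into nonnegative parts, and $a(Y)<s(X)$; let $A_2$ be the set of pairs $(X,Y)$ with $X$ a partition into distinct positive parts, $Y$ a nonempty triangular partition, and $a(Y)<s(X)$. For $(\lambda,\mu)\in R$ let $k=\min(\ell(\lambda),\ell(\mu))$, $p=\max(\ell(\lambda),\ell(\mu))$, $\nu=\lambda+\mu=(\nu_1,\dots,\nu_p)$, and set $\phi(\lambda,\mu)=((\nu_1,\dots,\nu_k),(\nu_{k+1},\dots,\nu_p))$. Then $\phi$ is a bijection from $R$ onto $A_1\sqcup A_2$ such that, writing $\phi(\lambda,\mu)=(X,Y)$: $|\lambda|+|\mu|=|X|+|Y|$; if $\ell(\lambda)\le\ell(\mu)$ then $(X,Y)\in A_1$, $\ell(X)=\ell(\lambda)$ and $\ell(X)+\ell(Y)=\ell(\mu)$; if $\ell(\lambda)>\ell(\mu)$ then $(X,Y)\in A_2$, $\ell(X)=\ell(\mu)$ and $\ell(X)+\ell(Y)=\ell(\lambda)$.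
   Context: A partition is a weakly decreasing finite sequence of integers; $\ell(A)$ is its number of parts, $|A|$ the sum of its parts, $a(A)$ its largest part and $s(A)$ its smallest part, with the conventions $a(\emptyset)=-\infty$... more precisely, the condition $a(Y)<s(X)$ is taken to hold vacuously when $X$ or $Y$ is empty. A triangular partition is $(n,n-1,\dots,1)$ for some $n\ge0$. For partitions $A=(A_1,A_2,\dots)$ and $B=(B_1,B_2,\dots)$, $A+B=(A_1+B_1,A_2+B_2,\dots)$ of length $\max(\ell(A),\ell(B))$, where missing parts are treated as $0$. *)

theory Defs
  imports Main
begin

text \<open>Partitions are represented as lists of natural numbers (weakly decreasing);
  zero parts are allowed and counted in the length.\<close>

definition is_partition :: "nat list \<Rightarrow> bool" where
  "is_partition xs \<longleftrightarrow> sorted_wrt (\<ge>) xs"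

definition triangular :: "nat \<Rightarrow> nat list" where
  "triangular n = rev [1..<Suc n]"

definition is_triangular :: "nat list \<Rightarrow> bool" where
  "is_triangular xs \<longleftrightarrow> (\<exists>n. xs = triangular n)"

definition distinct_pos_partition :: "nat list \<Rightarrow> bool" where
  "distinct_pos_partition xs \<longleftrightarrow> sorted_wrt (>) xs \<and> (\<forall>x\<in>set xs. 0 < x)"

text \<open>a(Y) < s(X), vacuous when X or Y is empty.\<close>
definition sep :: "nat list \<Rightarrow> nat list \<Rightarrow> bool" where
  "sep X Y \<longleftrightarrow> X = [] \<or> Y = [] \<or> hd Y < last X"

definition padd :: "nat list \<Rightarrow> nat list \<Rightarrow> nat list" where
  "padd A B = map (\<lambda>i. (if i < length A then A ! i else 0) + (if i < length B then B ! i else 0))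
                  [0..<max (length A) (length B)]"

definition R_set :: "(nat list \<times> nat list) set" where
  "R_set = {(l, m). is_triangular l \<and> is_partition m}"

definition A1_set :: "(nat list \<times> nat list) set" where
  "A1_set = {(X, Y). distinct_pos_partition X \<and> is_partition Y \<and> sep X Y}"

definition A2_set :: "(nat list \<times> nat list) set" where
  "A2_set = {(X, Y). distinct_pos_partition X \<and> is_triangular Y \<and> Y \<noteq> [] \<and> sep X Y}"

definition phi :: "nat list \<Rightarrow> nat list \<Rightarrow> nat list \<times> nat list" where
  "phi l m = (let k = min (length l) (length m); \<nu> = padd l m in (take k \<nu>, drop k \<nu>))"

definition phi_tagged :: "nat list \<times> nat list \<Rightarrow> (nat list \<times> nat list) + (nat list \<times> nat list)" where
  "phi_tagged p = (case p of (l, m) \<Rightarrow>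
     if length l \<le> length m then Inl (phi l m) else Inr (phi l m))"

end

theory Submission imports Defs begin

lemma len_tri[simp]: "length (triangular n) = n" by (simp add: triangular_def)
lemma nth_tri: "i < n \<Longrightarrow> triangular n ! i = n - i"
  unfolding triangular_def by (simp add: rev_nth del: upt_Suc)
lemma hd_tri: "0 < k \<Longrightarrow> hd (triangular k) = k"
  by (metis hd_conv_nth len_tri less_numeral_extra(3) list.size(3) minus_nat.diff_0 nth_tri)
lemma tri_Nil[simp]: "triangular j = [] \<longleftrightarrow> j = 0"
  by (metis len_tri length_0_conv)
lemma drop_tri: "drop m (triangular n) = triangular (n - m)"
  by (rule nth_equalityI) (auto simp: nth_tri)

lemma len_padd[simp]: "length (padd A B) = max (length A) (length B)"
  by (simp add: padd_def)
lemma nth_padd: "i < max (length A) (length B) \<Longrightarrow> padd A B ! i =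
  (if i < length A then A ! i else 0) + (if i < length B then B ! i else 0)"
  by (simp add: padd_def)

lemma padd_Nil1[simp]: "padd [] B = B"
  by (rule nth_equalityI) (auto simp: nth_padd)
lemma padd_Nil2[simp]: "padd A [] = A"
  by (rule nth_equalityI) (auto simp: nth_padd)
lemma padd_Cons[simp]: "padd (a#A) (b#B) = (a+b) # padd A B"
  by (rule nth_equalityI) (auto simp: nth_padd nth_Cons split: nat.splits)

lemma sum_padd: "sum_list (padd A B) = sum_list A + sum_list B"
proof (induction A arbitrary: B)
  case Nil then show ?case by simp
next
  case (Cons a A) then show ?case by (cases B) auto
qed

lemma padd_take: "k \<le> length A \<Longrightarrow> k \<le> length B \<Longrightarrow> take k (padd A B) = map (\<lambda>i. A!i + B!i) [0..<k]"
  by (rule nth_equalityI) (auto simp: nth_padd)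
lemma padd_dropB: "length A \<le> length B \<Longrightarrow> drop (length A) (padd A B) = drop (length A) B"
  by (rule nth_equalityI) (auto simp: nth_padd max_def)
lemma padd_dropA: "length B \<le> length A \<Longrightarrow> drop (length B) (padd A B) = drop (length B) A"
  by (rule nth_equalityI) (auto simp: nth_padd max_def)

lemma part_nth: "is_partition m \<Longrightarrow> i \<le> j \<Longrightarrow> j < length m \<Longrightarrow> m ! j \<le> m ! i"
  unfolding is_partition_def
  by (metis order.order_iff_strict sorted_wrt_nth_less)

lemma strict_nth: "sorted_wrt (>) X \<Longrightarrow> i \<le> j \<Longrightarrow> j < length X \<Longrightarrow> X!j + (j - i) \<le> X!i"
proof (induction j)
  case 0 then show ?case by simp
next
  case (Suc j)
  show ?case
  proof (cases "i = Suc j")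
    case True then show ?thesis by simp
  next
    case False
    with Suc have "X!j + (j - i) \<le> X!i" by auto
    moreover have "X ! Suc j < X ! j" using Suc.prems sorted_wrt_nth_less by fastforce
    ultimately show ?thesis using False Suc.prems by linarith
  qed
qed

lemma dpp_lb: "distinct_pos_partition X \<Longrightarrow> i < length X \<Longrightarrow> X!(length X - 1) + (length X - 1 - i) \<le> X!i"
  unfolding distinct_pos_partition_def using strict_nth[of X i "length X - 1"] by auto

lemma phi1: "n \<le> length m \<Longrightarrow> phi (triangular n) m = (map (\<lambda>i. n - i + m!i) [0..<n], drop n m)"
  unfolding phi_def Let_def using padd_take[of n "triangular n" m] padd_dropB[of "triangular n" m]
  by (simp add: min_def nth_tri)

lemma phi2: "length m < n \<Longrightarrow> phi (triangular n) m = (map (\<lambda>i. n - i + m!i) [0..<length m], triangular (n - length m))"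
  unfolding phi_def Let_def using padd_take[of "length m" "triangular n" m] padd_dropA[of m "triangular n"]
  by (simp add: min_def nth_tri drop_tri)

lemma A1_mem: "n \<le> length m \<Longrightarrow> is_partition m \<Longrightarrow>
  (map (\<lambda>i. n - i + m!i) [0..<n], drop n m) \<in> A1_set"
proof -
  assume a: "n \<le> length m" "is_partition m"
  have "distinct_pos_partition (map (\<lambda>i. n - i + m!i) [0..<n])"
    unfolding distinct_pos_partition_def sorted_wrt_iff_nth_less
  proof (intro conjI allI impI ballI)
    fix i j assume "i < j" "j < length (map (\<lambda>i. n - i + m!i) [0..<n])"
    then show "map (\<lambda>i. n - i + m!i) [0..<n] ! i > map (\<lambda>i. n - i + m!i) [0..<n] ! j"
      using a part_nth[OF a(2), of i j] by simp
  qed auto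
  moreover have "is_partition (drop n m)" using a(2) unfolding is_partition_def
    by (simp add: sorted_wrt_drop)
  moreover have "sep (map (\<lambda>i. n - i + m!i) [0..<n]) (drop n m)"
    unfolding sep_def using a part_nth[OF a(2), of "n - 1" n]
    by (cases "n = 0 \<or> n = length m") (auto simp: hd_drop_conv_nth last_map)
  ultimately show ?thesis by (simp add: A1_set_def)
qed

lemma A2_mem: "length m < n \<Longrightarrow> is_partition m \<Longrightarrow>
  (map (\<lambda>i. n - i + m!i) [0..<length m], triangular (n - length m)) \<in> A2_set"
proof -
  assume a: "length m < n" "is_partition m"
  have "distinct_pos_partition (map (\<lambda>i. n - i + m!i) [0..<length m])"
    unfolding distinct_pos_partition_def sorted_wrt_iff_nth_less
  proof (intro conjI allI impI ballI)
    fix i j assume "i < j" "j < length (map (\<lambda>i. n - i + m!i) [0..<length m])"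
    then show "map (\<lambda>i. n - i + m!i) [0..<length m] ! i > map (\<lambda>i. n - i + m!i) [0..<length m] ! j"
      using a part_nth[OF a(2), of i j] by simp
  qed (use a in auto)
  moreover have "triangular (n - length m) \<noteq> []" using a len_tri[of "n - length m"] by (metis less_numeral_extra(3) list.size(3) zero_less_diff)
  moreover have "sep (map (\<lambda>i. n - i + m!i) [0..<length m]) (triangular (n - length m))"
    unfolding sep_def using a
    by (cases m) (auto simp: hd_tri last_map)
  ultimately show ?thesis by (auto simp: A2_set_def is_triangular_def)
qed

definition psi :: "(nat list \<times> nat list) + (nat list \<times> nat list) \<Rightarrow> nat list \<times> nat list" where
 "psi t = (case t of Inl (X,Y) \<Rightarrow> (triangular (length X), map (\<lambda>i. X!i - (length X - i)) [0..<length X] @ Y)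
   | Inr (X,Y) \<Rightarrow> (triangular (length X + length Y), map (\<lambda>i. X!i - (length X + length Y - i)) [0..<length X]))"

lemma lb1: "distinct_pos_partition X \<Longrightarrow> i < length X \<Longrightarrow> length X - i \<le> X!i"
proof -
  assume a: "distinct_pos_partition X" "i < length X"
  have "X!(length X - 1) > 0" using a unfolding distinct_pos_partition_def by auto
  with dpp_lb[OF a] show ?thesis by linarith
qed

lemma lb2: "distinct_pos_partition X \<Longrightarrow> i < length X \<Longrightarrow> sep X (triangular j) \<Longrightarrow> 0 < j
   \<Longrightarrow> length X + j - i \<le> X!i"
proof -
  assume a: "distinct_pos_partition X" "i < length X" "sep X (triangular j)" "0 < j"
  have "X \<noteq> []" using a by auto
  then have "j < X!(length X - 1)" using a(3,4) unfolding sep_def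
    by (auto simp: hd_tri last_conv_nth)
  with dpp_lb[OF a(1,2)] show ?thesis by linarith
qed

lemma strict_diff: "distinct_pos_partition X \<Longrightarrow> i < j \<Longrightarrow> j < length X \<Longrightarrow> n - j \<le> X!j \<Longrightarrow>
   X!j - (n - j) \<le> X!i - (n - i)"
  unfolding distinct_pos_partition_def using strict_nth[of X i j] by auto

lemma inl_case: "(X,Y) \<in> A1_set \<Longrightarrow> psi (Inl (X,Y)) \<in> R_set \<and> phi_tagged (psi (Inl (X,Y))) = Inl (X,Y)"
proof -
  assume "(X,Y) \<in> A1_set"
  then have d: "distinct_pos_partition X" and p: "is_partition Y" and s: "sep X Y"
    by (auto simp: A1_set_def)
  define n where "n = length X"
  define M where "M = map (\<lambda>i. X!i - (n - i)) [0..<n]"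
  have lb: "\<And>i. i < n \<Longrightarrow> n - i \<le> X!i" using lb1[OF d] n_def by auto
  have pM: "is_partition (M @ Y)"
    unfolding is_partition_def sorted_wrt_append
  proof (intro conjI ballI)
    show "sorted_wrt (\<ge>) M" unfolding M_def sorted_wrt_iff_nth_less
    proof (intro allI impI)
      fix i j assume "i < j" "j < length (map (\<lambda>i. X ! i - (n - i)) [0..<n])"
      then show "map (\<lambda>i. X ! i - (n - i)) [0..<n] ! j \<le> map (\<lambda>i. X ! i - (n - i)) [0..<n] ! i"
        using strict_diff[OF d, of i j n] lb[of j] n_def by simp
    qed
    show "sorted_wrt (\<ge>) Y" using p by (simp add: is_partition_def)
    fix x y assume x: "x \<in> set M" and y: "y \<in> set Y"
    obtain i where i: "i < n" "x = X!i - (n - i)" using x by (auto simp: M_def)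
    have "y \<le> hd Y" using y p unfolding is_partition_def
      by (cases Y) auto
    also have "hd Y < X!(n-1)" using s i y unfolding sep_def n_def
      by (metis last_conv_nth length_pos_if_in_set less_nat_zero_code list.size(3))
    finally have "y < X!(n-1)" .
    moreover have "X!(n-1) + (n - 1 - i) \<le> X!i" using dpp_lb[OF d] i n_def by auto
    ultimately show "y \<le> x" using i by linarith
  qed
  have psi: "psi (Inl (X,Y)) = (triangular n, M @ Y)" by (simp add: psi_def M_def n_def)
  have lM: "length M = n" by (simp add: M_def)
  have "phi (triangular n) (M @ Y) = (X, Y)"
  proof -
    have "map (\<lambda>i. n - i + (M @ Y) ! i) [0..<n] = X"
    proof (rule nth_equalityI)
      fix i assume "i < length (map (\<lambda>i. n - i + (M @ Y) ! i) [0..<n])"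
      then show "map (\<lambda>i. n - i + (M @ Y) ! i) [0..<n] ! i = X ! i"
        using lb[of i] lM by (simp add: nth_append M_def)
    qed (simp add: n_def)
    then show ?thesis using phi1[of n "M @ Y"] lM by simp
  qed
  then show ?thesis using psi pM lM
    by (auto simp: R_set_def is_triangular_def phi_tagged_def)
qed

lemma inr_case: "(X,Y) \<in> A2_set \<Longrightarrow> psi (Inr (X,Y)) \<in> R_set \<and> phi_tagged (psi (Inr (X,Y))) = Inr (X,Y)"
proof -
  assume "(X,Y) \<in> A2_set"
  then obtain j where d: "distinct_pos_partition X" and Y: "Y = triangular j" and j: "0 < j" and s: "sep X Y"
    by (auto simp: A2_set_def is_triangular_def)
  define n where "n = length X + j"
  define M where "M = map (\<lambda>i. X!i - (n - i)) [0..<length X]"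
  have lb: "\<And>i. i < length X \<Longrightarrow> n - i \<le> X!i" using lb2[OF d _ s[unfolded Y] j] n_def by auto
  have pM: "is_partition M"
    unfolding is_partition_def M_def sorted_wrt_iff_nth_less
  proof (intro allI impI)
    fix i k assume "i < k" "k < length (map (\<lambda>i. X ! i - (n - i)) [0..<length X])"
    then show "map (\<lambda>i. X ! i - (n - i)) [0..<length X] ! k \<le> map (\<lambda>i. X ! i - (n - i)) [0..<length X] ! i"
      using strict_diff[OF d, of i k n] lb[of k] by simp
  qed
  have psi: "psi (Inr (X,Y)) = (triangular n, M)" by (simp add: psi_def M_def n_def Y)
  have lM: "length M = length X" by (simp add: M_def)
  have "phi (triangular n) M = (X, Y)"
  proof -
    have "map (\<lambda>i. n - i + M ! i) [0..<length X] = X"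
      by (rule nth_equalityI) (auto simp: M_def lb)
    then show ?thesis using phi2[of M n] lM j by (simp add: n_def Y)
  qed
  then show ?thesis using psi pM lM j
    by (auto simp: R_set_def is_triangular_def phi_tagged_def n_def)
qed

lemma fwd: "(l, m) \<in> R_set \<Longrightarrow> phi l m = (X, Y) \<Longrightarrow>
       sum_list l + sum_list m = sum_list X + sum_list Y \<and>
       (length l \<le> length m \<longrightarrow>
          (X, Y) \<in> A1_set \<and> length X = length l \<and> length X + length Y = length m) \<and>
       (length l > length m \<longrightarrow>
          (X, Y) \<in> A2_set \<and> length X = length m \<and> length X + length Y = length l)"
proof -
  assume R: "(l, m) \<in> R_set" and e: "phi l m = (X, Y)"
  then obtain n where l: "l = triangular n" and p: "is_partition m"
    by (auto simp: R_set_def is_triangular_def)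
  have "sum_list X + sum_list Y = sum_list (padd l m)"
    using e unfolding phi_def Let_def
    by (metis append_take_drop_id prod.inject sum_list_append)
  then have s: "sum_list l + sum_list m = sum_list X + sum_list Y" by (simp add: sum_padd)
  show ?thesis
  proof (cases "n \<le> length m")
    case True
    then show ?thesis using s e phi1[OF True] A1_mem[OF True p] l by auto
  next
    case False
    then have F: "length m < n" by simp
    then show ?thesis using s e phi2[OF F] A2_mem[OF F p] l by auto
  qed
qed

lemma backL: "(l, m) \<in> R_set \<Longrightarrow> psi (phi_tagged (l, m)) = (l, m)"
proof -
  assume R: "(l, m) \<in> R_set"
  then obtain n where l: "l = triangular n" and p: "is_partition m"
    by (auto simp: R_set_def is_triangular_def)
  show ?thesis
  proof (cases "n \<le> length m")
    case True
    have "map (\<lambda>i. map (\<lambda>i. n - i + m ! i) [0..<n] ! i - (n - i)) [0..<n] = take n m"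
      by (rule nth_equalityI) (use True in auto)
    then show ?thesis using True phi1[OF True] l by (simp add: phi_tagged_def psi_def)
  next
    case False
    then have F: "length m < n" by simp
    have "map (\<lambda>i. map (\<lambda>i. n - i + m ! i) [0..<length m] ! i - (n - i)) [0..<length m] = m"
      by (rule nth_equalityI) auto
    then show ?thesis using F phi2[OF F] l by (simp add: phi_tagged_def psi_def)
  qed
qed

theorem mainTheorem6:
  shows "bij_betw phi_tagged R_set (A1_set <+> A2_set) \<and>
    (\<forall>l m X Y. (l, m) \<in> R_set \<longrightarrow> phi l m = (X, Y) \<longrightarrow>
       sum_list l + sum_list m = sum_list X + sum_list Y \<and>
       (length l \<le> length m \<longrightarrow>
          (X, Y) \<in> A1_set \<and> length X = length l \<and> length X + length Y = length m) \<and>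
       (length l > length m \<longrightarrow>
          (X, Y) \<in> A2_set \<and> length X = length m \<and> length X + length Y = length l))"
proof
  show "bij_betw phi_tagged R_set (A1_set <+> A2_set)"
  proof (rule bij_betw_byWitness[where f'=psi])
    show "\<forall>a\<in>R_set. psi (phi_tagged a) = a" using backL by auto
    show "\<forall>a'\<in>A1_set <+> A2_set. phi_tagged (psi a') = a'"
      using inl_case inr_case by auto
    show "phi_tagged ` R_set \<subseteq> A1_set <+> A2_set"
    proof
      fix t assume "t \<in> phi_tagged ` R_set"
      then obtain l m where R: "(l,m) \<in> R_set" and t: "t = phi_tagged (l,m)" by auto
      obtain X Y where e: "phi l m = (X,Y)" by fastforce
      show "t \<in> A1_set <+> A2_set" using fwd[OF R e] t e by (auto simp: phi_tagged_def)
    qed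
    show "psi ` (A1_set <+> A2_set) \<subseteq> R_set"
      using inl_case inr_case by auto
  qed
  show "\<forall>l m X Y. (l, m) \<in> R_set \<longrightarrow> phi l m = (X, Y) \<longrightarrow>
       sum_list l + sum_list m = sum_list X + sum_list Y \<and>
       (length l \<le> length m \<longrightarrow>
          (X, Y) \<in> A1_set \<and> length X = length l \<and> length X + length Y = length m) \<and>
       (length l > length m \<longrightarrow>
          (X, Y) \<in> A2_set \<and> length X = length m \<and> length X + length Y = length l)"
    using fwd by blast
qed

end
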